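(* For parameters $a,b,t>0$ with $1/t<1/a<b<t$, the quantity $$Q(a,b;t)=\frac{I_1+I_3}{I_2}-\frac{J_1+J_3}{J_2}$$ does not depend on $\rho$, and if $Q(a,b;t)=0$ then there is a unique $\rho>0$ for which $I_1+I_3=J_1+J_3$ and $I_2=J_2$ hold.
   Context: Weierstrass data: for real $a,b,t>0$ with $1/t<1/a<b<t$ and $\rho>0$, set $\phi_1=-\rho\,(z+a)^{1/2}(z+1/b)^{-1/2}(z-1/a)^{1/2}(z-b)^{-1/2}[(z+t)(z+1/t)(z-1/t)(z-t)]^{-1/2}dz$ and $\phi_2=\rho^{-1}(z+a)^{-1/2}(z+1/b)^{1/2}(z-1/a)^{-1/2}(z-b)^{1/2}[(z+t)(z+1/t)(z-1/t)(z-t)]^{-1/2}dz$; let $v_1<\dots<v_8$ be $-t,-a,-1/b,-1/t,1/t,1/a,b,t$, and $I_k=\int_{v_k}^{v_{k+1}}|\phi_1|$, $J_k=\int_{v_k}^{v_{k+1}}|\phi_2|$ (integrals of absolute values of the coefficient functions over real intervals). *)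

theory Defs
  imports "HOL-Analysis.Analysis"
begin

text \<open>Absolute values of the coefficient functions of the Weierstrass data on the real line.
  For real z, |w^(1/2)| = sqrt |w| and |w^(-1/2)| = 1 / sqrt |w|.\<close>

definition quartic :: "real \<Rightarrow> real \<Rightarrow> real" where
  "quartic t z = (z + t) * (z + 1/t) * (z - 1/t) * (z - t)"

definition phi1_abs :: "real \<Rightarrow> real \<Rightarrow> real \<Rightarrow> real \<Rightarrow> real \<Rightarrow> real" where
  "phi1_abs a b t \<rho> z =
     \<rho> * sqrt \<bar>z + a\<bar> * sqrt \<bar>z - 1/a\<bar>
       / (sqrt \<bar>z + 1/b\<bar> * sqrt \<bar>z - b\<bar> * sqrt \<bar>quartic t z\<bar>)"

definition phi2_abs :: "real \<Rightarrow> real \<Rightarrow> real \<Rightarrow> real \<Rightarrow> real \<Rightarrow> real" where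
  "phi2_abs a b t \<rho> z =
     (1/\<rho>) * sqrt \<bar>z + 1/b\<bar> * sqrt \<bar>z - b\<bar>
       / (sqrt \<bar>z + a\<bar> * sqrt \<bar>z - 1/a\<bar> * sqrt \<bar>quartic t z\<bar>)"

text \<open>Vertices v_1 < ... < v_8 (indexed from 1).\<close>
definition vtx :: "real \<Rightarrow> real \<Rightarrow> real \<Rightarrow> nat \<Rightarrow> real" where
  "vtx a b t k = [-t, -a, -1/b, -1/t, 1/t, 1/a, b, t] ! (k - 1)"

definition Iint :: "real \<Rightarrow> real \<Rightarrow> real \<Rightarrow> real \<Rightarrow> nat \<Rightarrow> real" where
  "Iint a b t \<rho> k = integral {vtx a b t k .. vtx a b t (k+1)} (phi1_abs a b t \<rho>)"

definition Jint :: "real \<Rightarrow> real \<Rightarrow> real \<Rightarrow> real \<Rightarrow> nat \<Rightarrow> real" where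
  "Jint a b t \<rho> k = integral {vtx a b t k .. vtx a b t (k+1)} (phi2_abs a b t \<rho>)"

definition Qfun :: "real \<Rightarrow> real \<Rightarrow> real \<Rightarrow> real \<Rightarrow> real" where
  "Qfun a b t \<rho> =
     (Iint a b t \<rho> 1 + Iint a b t \<rho> 3) / Iint a b t \<rho> 2
     - (Jint a b t \<rho> 1 + Jint a b t \<rho> 3) / Jint a b t \<rho> 2"

end

theory Submission imports Defs begin

lemma inv_sqrt_int:
  fixes l r p :: real
  assumes "l < r" "p = l \<or> p = r"
  shows "(\<lambda>z. 1 / sqrt \<bar>z - p\<bar>) integrable_on {l..r}"
  using assms(2)
proof
  assume p: "p = l"
  have "((\<lambda>z. 1 / sqrt \<bar>z - p\<bar>) has_integral (2 * sqrt (r - p) - 2 * sqrt (l - p))) {l..r}"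
  proof (rule fundamental_theorem_of_calculus_interior)
    show "l \<le> r" using assms by simp
    show "continuous_on {l..r} (\<lambda>z. 2 * sqrt (z - p))" by (intro continuous_intros)
    fix x assume x: "x \<in> {l<..<r}"
    then have "x - p > 0" using p by auto
    then show "((\<lambda>z. 2 * sqrt (z - p)) has_vector_derivative 1 / sqrt \<bar>x - p\<bar>) (at x)"
      unfolding has_real_derivative_iff_has_vector_derivative[symmetric]
      by (auto intro!: derivative_eq_intros simp: field_simps)
  qed
  then show ?thesis by blast
next
  assume p: "p = r"
  have "((\<lambda>z. 1 / sqrt \<bar>z - p\<bar>) has_integral ((- 2 * sqrt (p - r)) - (- 2 * sqrt (p - l)))) {l..r}"
  proof (rule fundamental_theorem_of_calculus_interior)
    show "l \<le> r" using assms by simp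
    show "continuous_on {l..r} (\<lambda>z. - 2 * sqrt (p - z))" by (intro continuous_intros)
    fix x assume x: "x \<in> {l<..<r}"
    then have "p - x > 0" using p by auto
    then show "((\<lambda>z. - 2 * sqrt (p - z)) has_vector_derivative 1 / sqrt \<bar>x - p\<bar>) (at x)"
      unfolding has_real_derivative_iff_has_vector_derivative[symmetric]
      by (auto intro!: derivative_eq_intros simp: field_simps abs_minus_commute)
  qed
  then show ?thesis by blast
qed

lemma sing_int_pos:
  fixes f h :: "real \<Rightarrow> real" and l r p :: real
  assumes lr: "l < r" and p: "p = l \<or> p = r"
    and hc: "continuous_on {l..r} h"
    and fh: "\<And>z. z \<in> {l..r} \<Longrightarrow> f z = h z / sqrt \<bar>z - p\<bar>"
    and f0: "\<And>z. z \<in> {l..r} \<Longrightarrow> 0 \<le> f z"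
    and fp: "\<And>z. z \<in> {l<..<r} \<Longrightarrow> 0 < f z"
  shows "f integrable_on {l..r} \<and> 0 < integral {l..r} f"
proof -
  obtain C where C: "\<And>z. z \<in> {l..r} \<Longrightarrow> norm (h z) \<le> C"
    using compact_continuous_image[OF hc compact_Icc] compact_imp_bounded bounded_iff
    by (metis image_eqI)
  define S where "S = {l..r} - {p}"
  have Sleb: "S \<in> sets lebesgue" unfolding S_def by auto
  have fcS: "continuous_on S f"
  proof -
    have "continuous_on S (\<lambda>z. h z / sqrt \<bar>z - p\<bar>)"
      using continuous_on_subset[OF hc, of S]
      by (intro continuous_intros) (auto simp: S_def)
    then show ?thesis by (rule continuous_on_cong[THEN iffD1, rotated 2]) (auto simp: S_def fh)
  qed
  have gint: "(\<lambda>z. C * (1 / sqrt \<bar>z - p\<bar>)) integrable_on S"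
  proof -
    have "(\<lambda>z. C * (1 / sqrt \<bar>z - p\<bar>)) integrable_on {l..r}"
      using inv_sqrt_int[OF lr p] by (intro integrable_on_mult_right) 
    then show ?thesis
      by (rule integrable_spike_set) (auto simp: S_def intro: negligible_subset[of "{p}"])
  qed
  have bnd: "norm (f x) \<le> C * (1 / sqrt \<bar>x - p\<bar>)" if "x \<in> S" for x
  proof -
    have x: "x \<in> {l..r}" using that by (auto simp: S_def)
    have "norm (f x) = norm (h x) / sqrt \<bar>x - p\<bar>" using fh[OF x] by (simp add: abs_divide)
    also have "\<dots> \<le> C / sqrt \<bar>x - p\<bar>" using C[OF x] by (simp add: divide_right_mono)
    finally show ?thesis by simp
  qed
  have "f absolutely_integrable_on S"
    by (rule measurable_bounded_by_integrable_imp_absolutely_integrable[OF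
          continuous_imp_measurable_on_sets_lebesgue[OF fcS Sleb] Sleb gint bnd])
  then have fiS: "f integrable_on S" using absolutely_integrable_on_def by blast
  have fi: "f integrable_on {l..r}"
    using fiS by (rule integrable_spike_set) (auto simp: S_def intro: negligible_subset[of "{p}"])
  define m1 where "m1 = l + (r - l) / 3"
  define m2 where "m2 = r - (r - l) / 3"
  have m: "l < m1" "m1 < m2" "m2 < r" using lr by (auto simp: m1_def m2_def field_simps)
  have sub: "{m1..m2} \<subseteq> S" using m p by (auto simp: S_def)
  have fc: "continuous_on {m1..m2} f" using continuous_on_subset[OF fcS sub] .
  have fi2: "f integrable_on {m1..m2}" using integrable_continuous_real[OF fc] .
  have i0: "integral {m1..m2} f \<ge> 0"
    using fi2 f0 m by (intro integral_nonneg) auto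
  have "integral {m1..m2} f \<noteq> 0"
  proof
    assume "integral {m1..m2} f = 0"
    then have hi: "(f has_integral 0) (cbox m1 m2)" using fi2 by (metis box_real(2) has_integral_integral)
    have "f ((m1+m2)/2) = 0"
      by (rule has_integral_0_cbox_imp_0[OF _ _ hi]) (use fc f0 m in auto)
    moreover have "f ((m1+m2)/2) > 0" using fp m by auto
    ultimately show False by simp
  qed
  with i0 have "0 < integral {m1..m2} f" by simp
  also have "integral {m1..m2} f \<le> integral {l..r} f"
    by (rule integral_subset_le) (use m fi2 fi f0 in auto)
  finally show ?thesis using fi by simp
qed

lemma phi1_scale: "phi1_abs a b t \<rho> z = \<rho> * phi1_abs a b t 1 z"
  unfolding phi1_abs_def by simp
lemma phi2_scale: "phi2_abs a b t \<rho> z = (1/\<rho>) * phi2_abs a b t 1 z"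
  unfolding phi2_abs_def by simp

lemma Iint_scale: "Iint a b t \<rho> k = \<rho> * Iint a b t 1 k"
  proof -
  have "phi1_abs a b t \<rho> = (\<lambda>z. \<rho> * phi1_abs a b t 1 z)" by (rule ext, rule phi1_scale)
  then show ?thesis unfolding Iint_def by simp
qed
lemma Jint_scale: "Jint a b t \<rho> k = (1/\<rho>) * Jint a b t 1 k"
  proof -
  have "phi2_abs a b t \<rho> = (\<lambda>z. (1/\<rho>) * phi2_abs a b t 1 z)" by (rule ext, rule phi2_scale)
  then show ?thesis unfolding Jint_def by simp
qed

lemma pos2:
  fixes a b t :: real
  assumes "a > 0" "b > 0" "t > 0" "1/t < 1/a" "1/a < b" "b < t"
  shows "Iint a b t 1 2 > 0 \<and> Jint a b t 1 2 > 0"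
proof -
  have at: "a < t" using assms by (simp add: field_simps)
  have bt: "1/t < 1/b" using assms by (simp add: field_simps)
  have "1/b > 0" "1/t > 0" using assms by auto
  have ab: "-a < -1/b" using assms by (simp add: field_simps)
  have v: "vtx a b t 2 = -a" "vtx a b t 3 = -1/b" by (simp_all add: vtx_def)
  have q: "quartic t z \<noteq> 0" if "z \<in> {-a..-1/b}" for z
  proof -
    have "z + t > 0" "z + 1/t < 0" "z - 1/t < 0" "z - t < 0"
      using that at bt assms(3) \<open>1/b > 0\<close> \<open>1/t > 0\<close>
      by (simp_all only: atLeastAtMost_iff) linarith+
    then show ?thesis unfolding quartic_def by auto
  qed
  have z1: "z - b \<noteq> 0" "z - 1/a \<noteq> 0" if "z \<in> {-a..-1/b}" for z
  proof -
    have "1/a > 0" using assms by simp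
    then show "z - b \<noteq> 0" "z - 1/a \<noteq> 0" using that assms(2) \<open>1/b > 0\<close>
      by (simp_all only: atLeastAtMost_iff) linarith+
  qed
  have "phi1_abs a b t 1 integrable_on {-a..-1/b} \<and> 0 < integral {-a..-1/b} (phi1_abs a b t 1)"
  proof (rule sing_int_pos[where p="-1/b" and h="\<lambda>z. sqrt \<bar>z + a\<bar> * sqrt \<bar>z - 1/a\<bar> / (sqrt \<bar>z - b\<bar> * sqrt \<bar>quartic t z\<bar>)"])
    show "-a < -1/b" by (rule ab)
    show "-1/b = -a \<or> -1/b = -1/b" by simp
    show "continuous_on {-a..-1/b} (\<lambda>z. sqrt \<bar>z + a\<bar> * sqrt \<bar>z - 1/a\<bar> / (sqrt \<bar>z - b\<bar> * sqrt \<bar>quartic t z\<bar>))"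
      using q z1 unfolding quartic_def by (intro continuous_intros) auto
    fix z
    show "z \<in> {-a..-1/b} \<Longrightarrow> phi1_abs a b t 1 z = sqrt \<bar>z + a\<bar> * sqrt \<bar>z - 1/a\<bar> / (sqrt \<bar>z - b\<bar> * sqrt \<bar>quartic t z\<bar>) / sqrt \<bar>z - - 1 / b\<bar>"
      unfolding phi1_abs_def by (simp add: divide_divide_eq_left mult_ac)
    show "z \<in> {-a..-1/b} \<Longrightarrow> 0 \<le> phi1_abs a b t 1 z"
      unfolding phi1_abs_def by simp
    assume zi: "z \<in> {-a<..<-1/b}"
    then have "z \<in> {-a..-1/b}" by auto
    with zi q z1 show "0 < phi1_abs a b t 1 z"
      unfolding phi1_abs_def by (auto intro!: divide_pos_pos mult_pos_pos)
  qed
  moreover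
  have "phi2_abs a b t 1 integrable_on {-a..-1/b} \<and> 0 < integral {-a..-1/b} (phi2_abs a b t 1)"
  proof (rule sing_int_pos[where p="-a" and h="\<lambda>z. sqrt \<bar>z + 1/b\<bar> * sqrt \<bar>z - b\<bar> / (sqrt \<bar>z - 1/a\<bar> * sqrt \<bar>quartic t z\<bar>)"])
    show "-a < -1/b" by (rule ab)
    show "-a = -a \<or> -a = -1/b" by simp
    show "continuous_on {-a..-1/b} (\<lambda>z. sqrt \<bar>z + 1/b\<bar> * sqrt \<bar>z - b\<bar> / (sqrt \<bar>z - 1/a\<bar> * sqrt \<bar>quartic t z\<bar>))"
      using q z1 unfolding quartic_def by (intro continuous_intros) auto
    fix z
    show "z \<in> {-a..-1/b} \<Longrightarrow> phi2_abs a b t 1 z = sqrt \<bar>z + 1/b\<bar> * sqrt \<bar>z - b\<bar> / (sqrt \<bar>z - 1/a\<bar> * sqrt \<bar>quartic t z\<bar>) / sqrt \<bar>z - - a\<bar>"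
      unfolding phi2_abs_def by (simp add: divide_divide_eq_left mult_ac)
    show "z \<in> {-a..-1/b} \<Longrightarrow> 0 \<le> phi2_abs a b t 1 z"
      unfolding phi2_abs_def by simp
    assume zi: "z \<in> {-a<..<-1/b}"
    then have "z \<in> {-a..-1/b}" by auto
    with zi q z1 show "0 < phi2_abs a b t 1 z"
      unfolding phi2_abs_def by (auto intro!: divide_pos_pos mult_pos_pos)
  qed
  ultimately show ?thesis unfolding Iint_def Jint_def by (simp add: v)
qed

lemma canc: "(c::real) \<noteq> 0 \<Longrightarrow> (c*x + c*y)/(c*z) = (x+y)/z"
  by (metis distrib_left mult_divide_mult_cancel_left)

lemma Q_indep: assumes "\<rho> > 0" shows "Qfun a b t \<rho> = Qfun a b t 1"
  unfolding Qfun_def Iint_scale[of a b t \<rho>] Jint_scale[of a b t \<rho>]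
  using assms canc[of \<rho>] canc[of "1/\<rho>"] by simp

theorem mainTheorem4:
  fixes a b t :: real
  assumes "a > 0" "b > 0" "t > 0" "1/t < 1/a" "1/a < b" "b < t"
  shows "(\<forall>\<rho>1 \<rho>2. \<rho>1 > 0 \<longrightarrow> \<rho>2 > 0 \<longrightarrow> Qfun a b t \<rho>1 = Qfun a b t \<rho>2)
       \<and> (\<forall>\<rho>0. \<rho>0 > 0 \<longrightarrow> Qfun a b t \<rho>0 = 0 \<longrightarrow>
            (\<exists>!\<rho>. \<rho> > 0 \<and>
               Iint a b t \<rho> 1 + Iint a b t \<rho> 3 = Jint a b t \<rho> 1 + Jint a b t \<rho> 3
               \<and> Iint a b t \<rho> 2 = Jint a b t \<rho> 2))"
proof (intro conjI allI impI)
  fix \<rho>1 \<rho>2 :: real assume "\<rho>1 > 0" "\<rho>2 > 0"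
  then show "Qfun a b t \<rho>1 = Qfun a b t \<rho>2" using Q_indep by metis
next
  fix \<rho>0 :: real assume r0: "\<rho>0 > 0" "Qfun a b t \<rho>0 = 0"
  define A1 where "A1 = Iint a b t 1 1"
  define A2 where "A2 = Iint a b t 1 2"
  define A3 where "A3 = Iint a b t 1 3"
  define B1 where "B1 = Jint a b t 1 1"
  define B2 where "B2 = Jint a b t 1 2"
  define B3 where "B3 = Jint a b t 1 3"
  have pos: "A2 > 0" "B2 > 0" using pos2[OF assms] by (auto simp: A2_def B2_def)
  have Q: "(A1 + A3) / A2 = (B1 + B3) / B2"
    using r0 Q_indep[OF r0(1), of a b t] unfolding Qfun_def A1_def A2_def A3_def B1_def B2_def B3_def
    by simp
  have E: "(\<rho> > 0 \<and> Iint a b t \<rho> 1 + Iint a b t \<rho> 3 = Jint a b t \<rho> 1 + Jint a b t \<rho> 3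
               \<and> Iint a b t \<rho> 2 = Jint a b t \<rho> 2) \<longleftrightarrow> \<rho> = sqrt (B2 / A2)" for \<rho>
  proof
    assume h: "\<rho> > 0 \<and> Iint a b t \<rho> 1 + Iint a b t \<rho> 3 = Jint a b t \<rho> 1 + Jint a b t \<rho> 3
               \<and> Iint a b t \<rho> 2 = Jint a b t \<rho> 2"
    then have "\<rho> * A2 = B2 / \<rho>" "\<rho> > 0"
      by (auto simp: Iint_scale[of a b t \<rho>] Jint_scale[of a b t \<rho>] A2_def B2_def)
    then have "\<rho>^2 = B2 / A2" using pos by (simp add: field_simps power2_eq_square)
    then show "\<rho> = sqrt (B2 / A2)" using \<open>\<rho> > 0\<close> by (metis less_le real_sqrt_unique)
  next
    assume r: "\<rho> = sqrt (B2 / A2)"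
    have rp: "\<rho> > 0" using r pos by simp
    have r2: "\<rho> * \<rho> = B2 / A2" using r pos by simp
    have "\<rho> * A2 = B2 / \<rho>" using r2 rp pos by (simp add: field_simps)
    moreover have "\<rho> * (A1 + A3) = (B1 + B3) / \<rho>"
    proof -
      have "B1 + B3 = B2 * ((A1 + A3) / A2)" using Q pos by simp
      also have "\<dots> = (A1 + A3) * (\<rho> * \<rho>)" using r2 by simp
      finally show ?thesis using rp by (simp add: field_simps)
    qed
    ultimately show "\<rho> > 0 \<and> Iint a b t \<rho> 1 + Iint a b t \<rho> 3 = Jint a b t \<rho> 1 + Jint a b t \<rho> 3
               \<and> Iint a b t \<rho> 2 = Jint a b t \<rho> 2" using rp
      by (simp add: Iint_scale[of a b t \<rho>] Jint_scale[of a b t \<rho>] A1_def A2_def A3_def B1_def B2_def B3_def algebra_simps add_divide_distrib)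
  qed
  show "\<exists>!\<rho>. \<rho> > 0 \<and>
               Iint a b t \<rho> 1 + Iint a b t \<rho> 3 = Jint a b t \<rho> 1 + Jint a b t \<rho> 3
               \<and> Iint a b t \<rho> 2 = Jint a b t \<rho> 2"
    unfolding E by blast
qed

end
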